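(* Let $M$ be a finite-horizon reward-free MDP, $\Pi\subseteq\Pi_{\mathrm{RNS}}$ and $h\in[H]$. For all $\varepsilon>0$, $$\mathsf{Cov}^M_{h,\varepsilon}\le 1+2\sqrt{\frac{C^M_{1;h}}{\varepsilon}}.$$
   Context: Episodic reward-free MDP $M$ (countable $\mathcal{X}$, actions $\mathcal{A}$, horizon $H$); $\Pi_{\mathrm{RNS}}$ randomized non-stationary policies; $d^{M,\pi}_h(x,a)$ is the layer-$h$ state-action occupancy and $d^{M,p}_h=\mathbb{E}_{\pi\sim p}d^{M,\pi}_h$. Definitions: $\Psi^M_{h,\varepsilon}(p)=\sup_{\pi\in\Pi}\mathbb{E}^{M,\pi}\big[\frac{d^{M,\pi}_h(x_h,a_h)}{d^{M,p}_h(x_h,a_h)+\varepsilon d^{M,\pi}_h(x_h,a_h)}\big]$, $\mathsf{Cov}^M_{h,\varepsilon}=\inf_{p\in\Delta(\Pi)}\Psi^M_{h,\varepsilon}(p)$, and $C^M_{1;h}=\inf_{\mu\in\Delta(\mathcal{X}\times\mathcal{A})}\sup_{\pi\in\Pi}\mathbb{E}^{M,\pi}\big[\frac{d^{M,\pi}_h(x_h,a_h)}{\mu(x_h,a_h)}\big]$. *)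

theory Defs
  imports "HOL-Probability.Probability"
begin

text \<open>Episodic reward-free MDP: initial state distribution (layer 1) and
  layer-dependent transition kernels P_h(. | x, a).  The horizon H is kept
  as a separate natural number.\<close>
record ('x, 'a) mdp =
  init  :: "'x pmf"
  trans :: "nat \<Rightarrow> 'x \<Rightarrow> 'a \<Rightarrow> 'x pmf"

text \<open>Randomized non-stationary policy pi = (pi_1, ..., pi_H), pi_h : X -> Delta(A).
  Pi_RNS is the set of all such policies (the whole type).\<close>
type_synonym ('x, 'a) policy = "nat \<Rightarrow> 'x \<Rightarrow> 'a pmf"

text \<open>Distribution of the state x_{n+1} at layer n+1 (0-based helper).\<close>
primrec state_dist0 :: "('x, 'a) mdp \<Rightarrow> ('x, 'a) policy \<Rightarrow> nat \<Rightarrow> 'x pmf" where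
  "state_dist0 M \<pi> 0 = init M"
| "state_dist0 M \<pi> (Suc n) =
     bind_pmf (state_dist0 M \<pi> n)
       (\<lambda>x. bind_pmf (\<pi> (Suc n) x) (\<lambda>a. trans M (Suc n) x a))"

text \<open>Law of (x_h, a_h) under M and pi, for layers h >= 1.\<close>
definition sa_dist :: "('x, 'a) mdp \<Rightarrow> ('x, 'a) policy \<Rightarrow> nat \<Rightarrow> ('x \<times> 'a) pmf" where
  "sa_dist M \<pi> h = bind_pmf (state_dist0 M \<pi> (h - 1)) (\<lambda>x. map_pmf (Pair x) (\<pi> h x))"

definition occ :: "('x, 'a) mdp \<Rightarrow> ('x, 'a) policy \<Rightarrow> nat \<Rightarrow> 'x \<times> 'a \<Rightarrow> real" where
  "occ M \<pi> h z = pmf (sa_dist M \<pi> h) z"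

definition mix_occ :: "('x, 'a) mdp \<Rightarrow> ('x, 'a) policy pmf \<Rightarrow> nat \<Rightarrow> 'x \<times> 'a \<Rightarrow> ennreal" where
  "mix_occ M p h z = (\<integral>\<^sup>+ \<pi>. ennreal (occ M \<pi> h z) \<partial>measure_pmf p)"

definition Psi :: "('x, 'a) mdp \<Rightarrow> ('x, 'a) policy set \<Rightarrow> nat \<Rightarrow> real \<Rightarrow> ('x, 'a) policy pmf \<Rightarrow> ennreal" where
  "Psi M Pol h \<epsilon> p = (SUP \<pi>\<in>Pol. \<integral>\<^sup>+ z. ennreal (occ M \<pi> h z)
        / (mix_occ M p h z + ennreal \<epsilon> * ennreal (occ M \<pi> h z)) \<partial>measure_pmf (sa_dist M \<pi> h))"

definition Cov :: "('x, 'a) mdp \<Rightarrow> ('x, 'a) policy set \<Rightarrow> nat \<Rightarrow> real \<Rightarrow> ennreal" where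
  "Cov M Pol h \<epsilon> = (INF p\<in>{p. set_pmf p \<subseteq> Pol}. Psi M Pol h \<epsilon> p)"

definition C1 :: "('x, 'a) mdp \<Rightarrow> ('x, 'a) policy set \<Rightarrow> nat \<Rightarrow> ennreal" where
  "C1 M Pol h = (INF \<mu>\<in>(UNIV :: ('x \<times> 'a) pmf set). SUP \<pi>\<in>Pol.
        \<integral>\<^sup>+ z. ennreal (occ M \<pi> h z) / ennreal (pmf \<mu> z) \<partial>measure_pmf (sa_dist M \<pi> h))"

definition esqrt :: "ennreal \<Rightarrow> ennreal" where
  "esqrt x = (if x = \<top> then \<top> else ennreal (sqrt (enn2real x)))"

end

theory Submission
  imports Defs
begin

lemma G_pt:
  fixes a b c t :: real
  assumes "a \<ge> 0" "b \<ge> 0" "c \<ge> 0" "0 < t" "t < 1"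
  shows "min a c + t*b*(if a + t*b \<le> c then 1 else 0)
     \<le> min (b*t + a*(1-t)) c + t*a*(if a < c/(1-t) then 1 else 0)"
proof -
  have tb: "t*b \<ge> 0" "t*a \<ge> 0" "a*(1-t) \<ge> 0" using assms by simp_all
  have eq: "b*t + a*(1-t) = a + t*b - t*a" by (simp add: algebra_simps)
  have iff: "a < c/(1-t) \<longleftrightarrow> a*(1-t) < c" using assms by (simp add: less_divide_eq)
  show ?thesis
  proof (cases "a + t*b \<le> c")
    case True
    show ?thesis
    proof (cases "c = 0")
      case True
      then show ?thesis using \<open>a + t*b \<le> c\<close> tb assms by simp
    next
      case False
      have "a*(1-t) < c"
      proof (cases "a = 0")
        case True then show ?thesis using False assms by simp
      next
        case False
        then have "a*(1-t) < a" using assms by (simp add: mult_less_cancel_left1 )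
        then show ?thesis using \<open>a + t*b \<le> c\<close> tb by linarith
      qed
      then show ?thesis using True tb unfolding iff eq by simp
    qed
  next
    case False
    show ?thesis
    proof (cases "a*(1-t) < c")
      case True
      then show ?thesis using False tb unfolding iff eq by (simp add: min_def)
    next
      case F2: False
      have "a*(1-t) = a - t*a" by (simp add: algebra_simps)
      then show ?thesis using False F2 tb unfolding iff eq by (simp add: min_def)
    qed
  qed
qed

lemma F_pt:
  fixes a b m g e t :: real
  assumes "a \<ge> 0" "b \<ge> 0" "m \<ge> 0" "g > 0" "e > 0" "0 < t" "t \<le> e"
  shows "ennreal b * (ennreal b / (ennreal a + ennreal e * ennreal b))
    \<le> ennreal (1/e) * ennreal (b * (if a + t*b \<le> g*m then 1 else 0))
       + ennreal (1/g) * (ennreal b * (ennreal b / ennreal m))"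
proof -
  consider "b = 0" | "b > 0" "m = 0" | "b > 0" "m > 0" using assms by linarith
  then show ?thesis
  proof cases
    case 1 then show ?thesis by simp
  next
    case 2
    then have "ennreal b * (ennreal b / ennreal m) = top"
      by (simp add: ennreal_mult_top)
    then show ?thesis using assms by (simp add: ennreal_mult_top)
  next
    case 3
    have eb: "e*b > 0" using 3 assms by simp
    have d: "a + e*b > 0" using eb assms by linarith
    have L: "ennreal b * (ennreal b / (ennreal a + ennreal e * ennreal b)) = ennreal (b * (b/(a+e*b)))"
    proof -
      have 1: "ennreal a + ennreal e * ennreal b = ennreal (a + e*b)"
        using assms 3 by (simp add: ennreal_mult'' ennreal_plus)
      have 2: "ennreal b / ennreal (a + e*b) = ennreal (b/(a+e*b))"
        using d 3 by (simp add: divide_ennreal)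
      have 3: "ennreal b * ennreal (b/(a+e*b)) = ennreal (b * (b/(a+e*b)))"
        using d 3 by (intro ennreal_mult''[symmetric]) simp
      show ?thesis unfolding 1 2 3 ..
    qed
    have R: "ennreal (1/e) * ennreal (b * (if a + t*b \<le> g*m then 1 else 0))
       + ennreal (1/g) * (ennreal b * (ennreal b / ennreal m))
       = ennreal ((1/e) * (b * (if a + t*b \<le> g*m then 1 else 0)) + (1/g) * (b * (b/m)))"
    proof -
      define X where "X = b * (if a + t*b \<le> g*m then 1 else 0)"
      have X0: "X \<ge> 0" using 3 unfolding X_def by simp
      have r1: "ennreal (1/e) * ennreal X = ennreal ((1/e) * X)"
        using X0 by (intro ennreal_mult''[symmetric])
      have r2: "ennreal b / ennreal m = ennreal (b/m)" using 3 by (simp add: divide_ennreal)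
      have r3: "ennreal b * ennreal (b/m) = ennreal (b*(b/m))" using 3 by (intro ennreal_mult''[symmetric]) simp
      have r4: "ennreal (1/g) * ennreal (b*(b/m)) = ennreal ((1/g)*(b*(b/m)))" using 3 by (intro ennreal_mult''[symmetric]) simp
      have r5: "ennreal ((1/e) * X) + ennreal ((1/g)*(b*(b/m))) = ennreal ((1/e) * X + (1/g)*(b*(b/m)))"
        using 3 X0 assms by (intro ennreal_plus[symmetric]) simp_all
      show ?thesis unfolding X_def[symmetric] r1 r2 r3 r4 r5 ..
    qed
    have "b * (b/(a+e*b)) \<le> (1/e) * (b * (if a + t*b \<le> g*m then 1 else 0)) + (1/g) * (b * (b/m))"
    proof (cases "a + t*b \<le> g*m")
      case True
      have "e*b \<le> a + e*b" using assms by linarith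
      then have "b/(a+e*b) \<le> b/(e*b)" using 3 eb by (intro divide_left_mono) auto
      also have "... = 1/e" using 3 by simp
      finally have h1: "b/(a+e*b) \<le> 1/e" .
      have "b * (b/(a+e*b)) \<le> b*(1/e)" by (rule mult_left_mono[OF h1]) (use 3 in simp)
      moreover have "(1/g) * (b * (b/m)) \<ge> 0" using assms 3 by simp
      ultimately show ?thesis using True by simp
    next
      case False
      have "t*b \<le> e*b" using assms 3 by (simp add: mult_right_mono)
      then have "g*m \<le> a + e*b" using False by linarith
      then have "b/(a+e*b) \<le> b/(g*m)" using 3 assms d
        by (intro divide_left_mono) auto
      also have "... = (1/g)*(b/m)" by simp
      finally have h1: "b/(a+e*b) \<le> (1/g)*(b/m)" .
      have "b * (b/(a+e*b)) \<le> b*((1/g)*(b/m))" by (rule mult_left_mono[OF h1]) (use 3 in simp)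
      then show ?thesis using False by (simp add: algebra_simps)
    qed
    then show ?thesis unfolding L R by (rule ennreal_leI)
  qed
qed

lemma final_real:
  fixes e Cr s g t eta xi Xr :: real
  assumes e: "e > 0" and Cr: "Cr \<ge> 0" and s: "s = sqrt (Cr/e)"
    and g: "g = e*(s + 1/4)" and t: "t = min (1/2) (min e (1/(4 * s + 2)))"
    and eta: "eta = t*e/4" and xi: "xi = e/16"
    and X: "t*Xr \<le> eta + t*g/(1-t)"
  shows "Xr/e + (Cr+xi)/g \<le> 1 + 2 * s"
proof -
  have ce: "Cr/e \<ge> 0" using Cr e by simp
  have s0: "s \<ge> 0" using s ce by simp
  have ss: "s * s = Cr/e" using s ce Cr e by simp
  have Cre: "Cr = e*(s * s)" using ss e by simp
  have t0: "t > 0" using e s0 t by simp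
  have t1: "t \<le> 1/2" using t by simp
  have t2: "t \<le> 1/(4 * s + 2)" using t by simp
  have t3: "t*(4 * s + 2) \<le> 1" using t2 s0 by (simp add: le_divide_eq)
  have "Xr \<le> eta/t + g/(1-t)"
  proof -
    have "t*Xr \<le> t*(eta/t + g/(1-t))" using X t0 t1 by (simp add: algebra_simps)
    then show ?thesis using t0 by simp
  qed
  then have "Xr/e \<le> (eta/t + g/(1-t))/e" using e by (simp add: divide_right_mono)
  also have "... = 1/4 + (s+1/4)/(1-t)" using e t0 t1 unfolding eta g by (simp add: field_simps)
  also have "(s+1/4)/(1-t) \<le> s + 1/2"
    using t1 t3 by (simp add: divide_le_eq algebra_simps)
  finally have A: "Xr/e \<le> 3/4 + s" by simp
  have "Cr + xi = e*(s * s + 1/16)" unfolding Cre xi by (simp add: algebra_simps)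
  then have "(Cr+xi)/g = (e*(s * s + 1/16))/(e*(s+1/4))" unfolding g by simp
  also have "... = (s * s + 1/16)/(s+1/4)" using e by simp
  also have "... \<le> s + 1/4" using s0 by (simp add: divide_le_eq algebra_simps)
  finally show ?thesis using A by simp
qed

lemma occ_nonneg: "occ M \<pi> h z \<ge> 0" unfolding occ_def by simp
lemma occ_le1: "occ M \<pi> h z \<le> 1" unfolding occ_def by (simp add: pmf_le_1)

lemma sum_pmf_1: "(\<integral>\<^sup>+ z. ennreal (pmf p z) \<partial>count_space UNIV) = 1"
  by (simp add: nn_integral_pmf)

lemma mix_occ_le1: "mix_occ M q h z \<le> 1"
proof -
  have "mix_occ M q h z \<le> (\<integral>\<^sup>+ \<pi>. 1 \<partial>measure_pmf q)"
    unfolding mix_occ_def by (intro nn_integral_mono) (simp add: occ_le1)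
  also have "... = 1" by simp
  finally show ?thesis .
qed

lemma mix_occ_mix:
  assumes "0 < t" "t < 1"
  shows "mix_occ M (bind_pmf (bernoulli_pmf t) (\<lambda>c. if c then return_pmf \<pi> else q)) h z
     = ennreal (occ M \<pi> h z * t + enn2real (mix_occ M q h z) * (1-t))"
proof -
  have f: "mix_occ M q h z = ennreal (enn2real (mix_occ M q h z))"
    using neq_top_trans[OF ennreal_one_neq_top mix_occ_le1[of M q h z]] by (simp add: ennreal_enn2real_if)
  have "mix_occ M (bind_pmf (bernoulli_pmf t) (\<lambda>c. if c then return_pmf \<pi> else q)) h z
     = ennreal (occ M \<pi> h z) * ennreal t + mix_occ M q h z * ennreal (1-t)"
    using assms unfolding mix_occ_def by (simp add: occ_nonneg)
  also have "... = ennreal (occ M \<pi> h z * t + enn2real (mix_occ M q h z) * (1-t))"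
    using assms by (subst f) (simp add: occ_nonneg ennreal_plus ennreal_mult'')
  finally show ?thesis .
qed

theorem proposition7p1:
  fixes M :: "('x :: countable, 'a) mdp"
    and H :: nat and h :: nat
    and Pol :: "('x, 'a) policy set"
    and \<epsilon> :: real
  assumes "Pol \<noteq> {}"
    and "h \<in> {1..H}"
    and "\<epsilon> > 0"
  shows "Cov M Pol h \<epsilon> \<le> 1 + 2 * esqrt (C1 M Pol h / ennreal \<epsilon>)"
proof -
  obtain \<pi>0 where \<pi>0: "\<pi>0 \<in> Pol" using assms(1) by blast
  have e0: "\<epsilon> > 0" using assms(3) .
  define Q where "Q = {p :: ('x, 'a) policy pmf. set_pmf p \<subseteq> Pol}"
  show ?thesis
  proof (cases "C1 M Pol h = top")
    case True
    then have "esqrt (C1 M Pol h / ennreal \<epsilon>) = top" unfolding esqrt_def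
      by (simp add: ennreal_top_divide)
    then show ?thesis by (simp add: ennreal_mult_top)
  next
    case False
    obtain Cr where Cr: "C1 M Pol h = ennreal Cr" "Cr \<ge> 0" using False by (cases "C1 M Pol h") auto
    define s where "s = sqrt (Cr/\<epsilon>)"
    define g where "g = \<epsilon>*(s + 1/4)"
    define t where "t = min (1/2) (min \<epsilon> (1/(4 * s + 2)))"
    define eta where "eta = t*\<epsilon>/4"
    define xi where "xi = \<epsilon>/16"
    have ce: "Cr/\<epsilon> \<ge> 0" using Cr e0 by simp
    have s0: "s \<ge> 0" using ce unfolding s_def by simp
    have g0: "g > 0" using e0 s0 unfolding g_def by simp
    have t0: "t > 0" using e0 s0 unfolding t_def by simp
    have t1: "t \<le> 1/2" unfolding t_def by simp
    have te: "t \<le> \<epsilon>" unfolding t_def by simp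
    have eta0: "eta > 0" using t0 e0 unfolding eta_def by simp
    have xi0: "xi > 0" using e0 unfolding xi_def by simp
    obtain \<mu> :: "('x \<times> 'a) pmf" where \<mu>:
      "(SUP \<pi>\<in>Pol. \<integral>\<^sup>+ z. ennreal (occ M \<pi> h z) / ennreal (pmf \<mu> z) \<partial>measure_pmf (sa_dist M \<pi> h))
        < C1 M Pol h + ennreal xi"
    proof -
      have fin: "C1 M Pol h \<noteq> \<infinity>" using False by (simp add: infinity_ennreal_def)
      show ?thesis using INF_approx_ennreal[OF xi0 C1_def[of M Pol h] fin] that by blast
    qed
    have \<mu>b: "(\<integral>\<^sup>+ z. ennreal (occ M \<pi> h z) / ennreal (pmf \<mu> z) \<partial>measure_pmf (sa_dist M \<pi> h))
        \<le> ennreal (Cr + xi)" if "\<pi> \<in> Pol" for \<pi>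
    proof -
      have "(\<integral>\<^sup>+ z. ennreal (occ M \<pi> h z) / ennreal (pmf \<mu> z) \<partial>measure_pmf (sa_dist M \<pi> h))
        \<le> (SUP \<pi>\<in>Pol. \<integral>\<^sup>+ z. ennreal (occ M \<pi> h z) / ennreal (pmf \<mu> z) \<partial>measure_pmf (sa_dist M \<pi> h))"
        using that by (rule SUP_upper)
      also have "... \<le> ennreal (Cr + xi)" using \<mu> Cr xi0 by (simp add: ennreal_plus)
      finally show ?thesis .
    qed
    define G where "G q = (\<integral>\<^sup>+ z. min (mix_occ M q h z) (ennreal (g * pmf \<mu> z)) \<partial>count_space UNIV)" for q
    have Gle: "G q \<le> ennreal g" for q
    proof -
      have "G q \<le> (\<integral>\<^sup>+ z. ennreal g * ennreal (pmf \<mu> z) \<partial>count_space UNIV)"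
        unfolding G_def using g0 by (intro nn_integral_mono) (simp add: ennreal_mult'')
      also have "... = ennreal g" by (simp add: nn_integral_cmult sum_pmf_1)
      finally show ?thesis .
    qed
    define S where "S = (SUP q\<in>Q. G q)"
    have Qne: "Q \<noteq> {}" using \<pi>0 unfolding Q_def by (auto intro!: exI[of _ "return_pmf \<pi>0"])
    have "S \<le> ennreal g" unfolding S_def by (rule SUP_least) (rule Gle)
    then have "S \<noteq> top" using neq_top_trans[OF ennreal_neq_top] by blast
    then have Sfin: "S \<noteq> \<infinity>" by (simp add: infinity_ennreal_def)
    obtain q0 where q0: "q0 \<in> Q" "S < G q0 + ennreal eta"
      using SUP_approx_ennreal[OF eta0 Qne S_def Sfin] by blast
    have Gq0fin: "G q0 \<noteq> top" using neq_top_trans[OF ennreal_neq_top Gle] by blast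
    define a where "a z = enn2real (mix_occ M q0 h z)" for z
    have a0: "a z \<ge> 0" for z unfolding a_def by simp
    have amix: "mix_occ M q0 h z = ennreal (a z)" for z
      unfolding a_def using neq_top_trans[OF ennreal_one_neq_top mix_occ_le1[of M q0 h z]]
      by (simp add: ennreal_enn2real_if)
    have main: "(\<integral>\<^sup>+ z. ennreal (occ M \<pi> h z)
        / (mix_occ M q0 h z + ennreal \<epsilon> * ennreal (occ M \<pi> h z)) \<partial>measure_pmf (sa_dist M \<pi> h))
        \<le> ennreal (1 + 2 * s)" if \<pi>: "\<pi> \<in> Pol" for \<pi>
    proof -
      define b where "b z = occ M \<pi> h z" for z
      have b0: "b z \<ge> 0" for z unfolding b_def by (rule occ_nonneg)
      have bp: "pmf (sa_dist M \<pi> h) z = b z" for z unfolding b_def occ_def ..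
      have tl1: "t < 1" using t1 by simp
      define qt where "qt = bind_pmf (bernoulli_pmf t) (\<lambda>c. if c then return_pmf \<pi> else q0)"
      have "qt \<in> Q" using q0(1) \<pi> t0 tl1 unfolding qt_def Q_def
        by (auto simp: set_bind_pmf split: if_splits)
      then have Gqt: "G qt \<le> S" unfolding S_def by (rule SUP_upper)
      have mixqt: "mix_occ M qt h z = ennreal (b z * t + a z * (1-t))" for z
        unfolding qt_def a_def b_def using t0 tl1 by (rule mix_occ_mix)
      define I where "I z = (if a z + t * b z \<le> g * pmf \<mu> z then 1 else (0::real))" for z
      have I0: "I z \<ge> 0" for z unfolding I_def by simp
      define X where "X = (\<integral>\<^sup>+ z. ennreal (b z * I z) \<partial>count_space UNIV)"
      have pt: "min (mix_occ M q0 h z) (ennreal (g * pmf \<mu> z)) + ennreal t * ennreal (b z * I z)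
         \<le> min (mix_occ M qt h z) (ennreal (g * pmf \<mu> z)) + ennreal (t*g/(1-t)) * ennreal (pmf \<mu> z)" for z
      proof -
        have c0: "g * pmf \<mu> z \<ge> 0" using g0 by simp
        have r1: "min (a z) (g * pmf \<mu> z) + t * b z * I z
          \<le> min (b z * t + a z * (1-t)) (g * pmf \<mu> z) + t * a z * (if a z < (g * pmf \<mu> z)/(1-t) then 1 else 0)"
          unfolding I_def by (rule G_pt[OF a0 b0 c0 t0 tl1])
        have r2: "t * a z * (if a z < (g * pmf \<mu> z)/(1-t) then 1 else 0) \<le> t*g/(1-t) * pmf \<mu> z"
        proof (cases "a z < (g * pmf \<mu> z)/(1-t)")
          case True
          have h: "t * a z \<le> t * ((g * pmf \<mu> z)/(1-t))"
            by (rule mult_left_mono) (use True t0 in auto)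
          have e: "t*g/(1-t) * pmf \<mu> z = t * ((g * pmf \<mu> z)/(1-t))" by simp
          show ?thesis unfolding e using True h by simp
        next
          case False
          then show ?thesis using t0 tl1 g0 by simp
        qed
        have r3: "min (a z) (g * pmf \<mu> z) + t * (b z * I z)
          \<le> min (b z * t + a z * (1-t)) (g * pmf \<mu> z) + t*g/(1-t) * pmf \<mu> z"
          using r1 r2 by (simp add: mult.assoc)
        have nn1: "min (a z) (g * pmf \<mu> z) \<ge> 0" "t * (b z * I z) \<ge> 0" using a0 c0 t0 b0 I0 by simp_all
        have nn2: "b z * t + a z * (1-t) \<ge> 0" "t*g/(1-t) * pmf \<mu> z \<ge> 0" using a0 b0 t0 tl1 g0 by simp_all
        have L: "min (mix_occ M q0 h z) (ennreal (g * pmf \<mu> z)) + ennreal t * ennreal (b z * I z)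
           = ennreal (min (a z) (g * pmf \<mu> z) + t * (b z * I z))"
          unfolding amix using a0 c0 nn1 b0 I0
          by (simp add: min_ennreal ennreal_plus ennreal_mult''[symmetric] del: ennreal_plus_if)
        have R: "min (mix_occ M qt h z) (ennreal (g * pmf \<mu> z)) + ennreal (t*g/(1-t)) * ennreal (pmf \<mu> z)
           = ennreal (min (b z * t + a z * (1-t)) (g * pmf \<mu> z) + t*g/(1-t) * pmf \<mu> z)"
          unfolding mixqt using nn2 c0
          by (simp add: min_ennreal ennreal_plus ennreal_mult''[symmetric] del: ennreal_plus_if)
        show ?thesis unfolding L R by (rule ennreal_leI[OF r3])
      qed
      have "G q0 + ennreal t * X
          = (\<integral>\<^sup>+ z. min (mix_occ M q0 h z) (ennreal (g * pmf \<mu> z)) + ennreal t * ennreal (b z * I z) \<partial>count_space UNIV)"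
        unfolding G_def X_def by (simp add: nn_integral_add nn_integral_cmult)
      also have "... \<le> (\<integral>\<^sup>+ z. min (mix_occ M qt h z) (ennreal (g * pmf \<mu> z)) + ennreal (t*g/(1-t)) * ennreal (pmf \<mu> z) \<partial>count_space UNIV)"
        by (rule nn_integral_mono) (rule pt)
      also have "... = G qt + ennreal (t*g/(1-t))"
        unfolding G_def by (simp add: nn_integral_add nn_integral_cmult sum_pmf_1)
      also have "... \<le> S + ennreal (t*g/(1-t))" using Gqt by (rule add_right_mono)
      also have "... \<le> G q0 + (ennreal eta + ennreal (t*g/(1-t)))"
        using q0(2) by (simp add: add.assoc[symmetric] add_right_mono less_imp_le)
      finally have tX: "ennreal t * X \<le> ennreal eta + ennreal (t*g/(1-t))"
        using Gq0fin by (simp add: ennreal_add_left_cancel_le infinity_ennreal_def)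
      have "X \<le> (\<integral>\<^sup>+ z. ennreal (pmf (sa_dist M \<pi> h) z) \<partial>count_space UNIV)"
        unfolding X_def bp using b0 I0 by (intro nn_integral_mono) (simp add: I_def)
      then have "X \<le> 1" by (simp add: sum_pmf_1)
      then have Xfin: "X \<noteq> top" using neq_top_trans[OF ennreal_one_neq_top] by blast
      define Xr where "Xr = enn2real X"
      have XXr: "X = ennreal Xr" unfolding Xr_def using Xfin by (simp add: ennreal_enn2real_if)
      have Xr0: "Xr \<ge> 0" unfolding Xr_def by simp
      have tXr: "t * Xr \<le> eta + t*g/(1-t)"
      proof -
        have "ennreal (t * Xr) \<le> ennreal (eta + t*g/(1-t))"
          using tX unfolding XXr using t0 Xr0 eta0 g0 tl1
          by (simp add: ennreal_mult'' ennreal_plus del: ennreal_plus_if)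
        moreover have "ennreal eta + ennreal (t*g/(1-t)) = ennreal (eta + t*g/(1-t))"
          using eta0 g0 t0 tl1 by (intro ennreal_plus[symmetric]) simp_all
        moreover have "eta + t*g/(1-t) \<ge> 0" using eta0 g0 t0 tl1 by simp
        ultimately show ?thesis by (simp add: ennreal_le_iff del: ennreal_plus_if)
      qed
      have fin: "Xr/\<epsilon> + (Cr+xi)/g \<le> 1 + 2 * s"
        by (rule final_real[OF e0 Cr(2) s_def g_def t_def eta_def xi_def tXr])
      define Y where "Y = (\<integral>\<^sup>+ z. ennreal (b z) * (ennreal (b z) / ennreal (pmf \<mu> z)) \<partial>count_space UNIV)"
      have Yb: "Y \<le> ennreal (Cr + xi)"
        using \<mu>b[OF \<pi>] unfolding Y_def by (simp add: nn_integral_measure_pmf bp b_def)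
      have "(\<integral>\<^sup>+ z. ennreal (occ M \<pi> h z)
        / (mix_occ M q0 h z + ennreal \<epsilon> * ennreal (occ M \<pi> h z)) \<partial>measure_pmf (sa_dist M \<pi> h))
        = (\<integral>\<^sup>+ z. ennreal (b z) * (ennreal (b z) / (ennreal (a z) + ennreal \<epsilon> * ennreal (b z))) \<partial>count_space UNIV)"
        by (simp add: nn_integral_measure_pmf bp amix b_def)
      also have "... \<le> (\<integral>\<^sup>+ z. ennreal (1/\<epsilon>) * ennreal (b z * I z)
           + ennreal (1/g) * (ennreal (b z) * (ennreal (b z) / ennreal (pmf \<mu> z))) \<partial>count_space UNIV)"
        unfolding I_def by (intro nn_integral_mono F_pt a0 b0 pmf_nonneg g0 e0 t0 te)
      also have "... = ennreal (1/\<epsilon>) * X + ennreal (1/g) * Y"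
        unfolding X_def Y_def by (simp add: nn_integral_add nn_integral_cmult)
      also have "... \<le> ennreal (1/\<epsilon>) * ennreal Xr + ennreal (1/g) * ennreal (Cr + xi)"
        unfolding XXr using Yb by (intro add_left_mono mult_left_mono) simp_all
      also have "... = ennreal (Xr/\<epsilon> + (Cr+xi)/g)"
      proof -
        have h1: "ennreal (1/\<epsilon>) * ennreal Xr = ennreal ((1/\<epsilon>)*Xr)"
          by (rule ennreal_mult''[symmetric]) (rule Xr0)
        have h2: "ennreal (1/g) * ennreal (Cr+xi) = ennreal ((1/g)*(Cr+xi))"
          by (rule ennreal_mult''[symmetric]) (use Cr(2) xi0 in simp)
        have h3: "ennreal ((1/\<epsilon>)*Xr) + ennreal ((1/g)*(Cr+xi)) = ennreal ((1/\<epsilon>)*Xr + (1/g)*(Cr+xi))"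
          by (rule ennreal_plus[symmetric]) (use Xr0 e0 g0 Cr(2) xi0 in simp_all)
        have h4: "(1/\<epsilon>)*Xr + (1/g)*(Cr+xi) = Xr/\<epsilon> + (Cr+xi)/g" by simp
        show ?thesis unfolding h1 h2 h3 h4 ..
      qed
      also have "... \<le> ennreal (1 + 2 * s)" using fin by (rule ennreal_leI)
      finally show ?thesis .
    qed
    have "Cov M Pol h \<epsilon> \<le> Psi M Pol h \<epsilon> q0"
      unfolding Cov_def using q0(1) unfolding Q_def by (rule INF_lower)
    also have "... \<le> ennreal (1 + 2 * s)"
      unfolding Psi_def by (rule SUP_least) (rule main)
    also have "... = 1 + 2 * esqrt (C1 M Pol h / ennreal \<epsilon>)"
    proof -
      have "C1 M Pol h / ennreal \<epsilon> = ennreal (Cr/\<epsilon>)" using Cr e0 by (simp add: divide_ennreal)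
      then have "esqrt (C1 M Pol h / ennreal \<epsilon>) = ennreal s"
        unfolding esqrt_def s_def using ce by simp
      then show ?thesis using s0 by (simp add: ennreal_plus ennreal_mult'')
    qed
    finally show ?thesis .
  qed
qed

end
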